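(* Let $n=4k$ with $k\ge2$, let $u_1,\ldots,u_k\in\mathbb{F}_{2^{2k}}^*$ satisfy $u_iu_j^{2^k}\in\mathbb{F}_{2^k}^*$ for all $1\le i<j\le k$, and let $\omega$ be a generator of the cyclic group $U=\{x\in\mathbb{F}_{2^{2k}}: x^{2^k+1}=1\}$. Let $t$ be a positive integer, $F_1,\ldots,F_t$ reduced polynomials in $\mathbb{F}_2[X_1,\ldots,X_k]$, and $f_i(x)=F_i(\mathrm{Tr}^n_1(u_1x),\ldots,\mathrm{Tr}^n_1(u_kx))$. Then $\widehat H(x)=(\mathrm{Tr}^n_k(\omega x^{2^k+1}),f_1(x),\ldots,f_t(x))$ is a vectorial plateaued $(n,k+t)$-function if and only if the $(n,t)$-function $(f_1,\ldots,f_t)$ is vectorial plateaued.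
   Context: $\mathrm{Tr}^m_1(x)=\sum_{i=0}^{m-1}x^{2^i}$, $\mathrm{Tr}^{4k}_k(x)=x+x^{2^k}+x^{2^{2k}}+x^{2^{3k}}$. $\widehat H:\mathbb{F}_{2^n}\to\mathbb{F}_{2^k}\times\mathbb{F}_2^t$ has components $\mathrm{Tr}^k_1(\lambda\,\mathrm{Tr}^n_k(\omega x^{2^k+1}))+\sum_iv_if_i(x)$, $(\lambda,v)\ne(0,0)$. A Boolean function $f$ is plateaued if $W_f(a)=\sum_x(-1)^{f(x)+\mathrm{Tr}^n_1(ax)}$ takes values in $\{0,\pm2^s\}$ for some $n/2\le s\le n$; a vectorial function is vectorial plateaued if all its components are plateaued. A reduced polynomial is a multilinear polynomial over $\mathbb{F}_2$. *)

theory Defs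
  imports Main
begin

definition tr :: "nat \<Rightarrow> 'a::field \<Rightarrow> 'a" where
  "tr m x = (\<Sum>i<m. x ^ (2 ^ i))"

definition rtr :: "nat \<Rightarrow> nat \<Rightarrow> 'a::field \<Rightarrow> 'a" where
  "rtr n k x = (\<Sum>i<n div k. x ^ (2 ^ (k * i)))"

text \<open>Walsh transform of a Boolean function f (values in F_2 = {0,1} inside the field),
  W_f(a) = sum_x (-1)^(f(x) + Tr^n_1(a x)).\<close>
definition walsh :: "nat \<Rightarrow> ('a::{field,finite} \<Rightarrow> 'a) \<Rightarrow> 'a \<Rightarrow> int" where
  "walsh n f a = (\<Sum>x\<in>UNIV. if f x + tr n (a * x) = 0 then 1 else -1)"

definition plateaued :: "nat \<Rightarrow> ('a::{field,finite} \<Rightarrow> 'a) \<Rightarrow> bool" where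
  "plateaued n f = (\<exists>s::nat. n \<le> 2 * s \<and> s \<le> n \<and>
      (\<forall>a. walsh n f a \<in> {0, 2 ^ s, - (2 ^ s)}))"

text \<open>Evaluation of a reduced (multilinear) polynomial over F_2 in variables X_0..X_{k-1},
  given by its coefficients c(S) in F_2 (True = 1) of the monomials prod_{i in S} X_i.\<close>
definition reduced_eval :: "nat \<Rightarrow> (nat set \<Rightarrow> bool) \<Rightarrow> (nat \<Rightarrow> 'a::field) \<Rightarrow> 'a" where
  "reduced_eval k c X = (\<Sum>S\<in>Pow {..<k}. if c S then (\<Prod>i\<in>S. X i) else 0)"

end

theory Submission
  imports Defs "HOL-Computational_Algebra.Polynomial"
begin

definition chi :: "'a::field \<Rightarrow> int" where "chi y = (if y = 0 then 1 else -1)"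

lemma shift_sum: "(\<Sum>x\<in>(UNIV::'a::{ab_group_add,finite} set). g (x + c)) = (\<Sum>x\<in>UNIV. g x)"
  by (rule sum.reindex_bij_witness[of _ "\<lambda>x. x - c" "\<lambda>x. x + c"]) auto

lemma pow2pow: "((x::'a::comm_monoid_mult) ^ (2^a)) ^ (2^b) = x ^ (2^(a+b))"
  by (simp add: power_mult[symmetric] power_add)

lemma roots_bound:
  fixes p :: "'a::{field,finite} poly"
  assumes "p \<noteq> 0" "\<And>x. x \<in> S \<Longrightarrow> poly p x = 0"
  shows "card S \<le> degree p"
proof -
  have "card S \<le> card {x. poly p x = 0}"
    by (rule card_mono) (use assms in auto)
  also have "\<dots> \<le> degree p" by (rule card_poly_roots_bound) fact
  finally show ?thesis .
qed

definition b01 :: "'a::field \<Rightarrow> bool" where "b01 y \<longleftrightarrow> y = 0 \<or> y = 1"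

context
  fixes n :: nat
  assumes cardF: "card (UNIV::'a::{field,finite} set) = 2^n" and npos: "0 < n"
begin

lemma fermat1:
  fixes x :: 'a
  assumes "x \<noteq> 0" shows "x ^ (2^n - 1) = 1"
proof -
  define S where "S = (UNIV::'a set) - {0}"
  have cS: "card S = 2^n - 1" unfolding S_def using cardF by (simp add: card_Diff_singleton)
  have bij: "bij_betw (\<lambda>y. x * y) S S"
    by (rule bij_betw_byWitness[of _ "\<lambda>y. y / x"]) (use assms in \<open>auto simp: S_def\<close>)
  have "(\<Prod>y\<in>S. x * y) = (\<Prod>y\<in>S. y)"
    using prod.reindex_bij_betw[OF bij, of "\<lambda>y. y"] by simp
  moreover have "(\<Prod>y\<in>S. x * y) = x ^ card S * (\<Prod>y\<in>S. y)"
    by (simp add: prod.distrib)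
  moreover have "(\<Prod>y\<in>S. y) \<noteq> 0" by (simp add: S_def)
  ultimately show ?thesis using cS by simp
qed

lemma fermat: "(x::'a) ^ (2^n) = x"
proof (cases "x = 0")
  case True then show ?thesis using npos by simp
next
  case False
  have "x ^ (2^n) = x * x ^ (2^n - 1)"
    by (metis One_nat_def Suc_pred pos2 power_Suc zero_less_power)
  then show ?thesis using fermat1[OF False] by simp
qed

lemma char2: "(1::'a) + 1 = 0"
proof -
  have "odd ((2::nat)^n - 1)" using npos by simp
  then have "(-1::'a) ^ (2^n - 1) = -1" by simp
  then have "(-1::'a) = 1" using fermat1[of "-1"] by simp
  then show ?thesis by (metis add.right_inverse)
qed

lemma add_self[simp]: "(x::'a) + x = 0"
proof -
  have two: "(2::'a) = 0" using char2 by simp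
  have "x + x = 2 * x" by simp
  then show ?thesis using two by simp
qed

lemma minus_eq_plus: "(x::'a) - y = x + y"
  by (metis add_self add_diff_cancel_right' diff_add_cancel add.assoc)

lemma frob2: "((x::'a) + y) ^ 2 = x ^ 2 + y ^ 2"
proof -
  have "(x + y)^2 = x^2 + y^2 + (x*y + x*y)" by algebra
  then show ?thesis by simp
qed

lemma frob: "((x::'a) + y) ^ (2^m) = x ^ (2^m) + y ^ (2^m)"
proof (induction m)
  case 0 then show ?case by simp
next
  case (Suc m)
  have "(x + y) ^ (2^Suc m) = ((x + y) ^ (2^m))^2" by (simp add: power_mult[symmetric] mult.commute)
  also have "\<dots> = (x ^ (2^m))^2 + (y ^ (2^m))^2" using Suc frob2 by simp
  also have "\<dots> = x ^ (2^Suc m) + y ^ (2^Suc m)" by (simp add: power_mult[symmetric] mult.commute)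
  finally show ?case .
qed

lemma frob_sum: "finite A \<Longrightarrow> (\<Sum>i\<in>A. (g i::'a)) ^ (2^m) = (\<Sum>i\<in>A. g i ^ (2^m))"
  by (induction A rule: finite_induct) (auto simp: frob)

lemma tr_add: "tr m ((x::'a) + y) = tr m x + tr m y"
  by (simp add: tr_def frob sum.distrib)

lemma fermat_gen: "(x::'a) ^ (2^(n+m)) = x ^ (2^m)"
  by (metis pow2pow fermat)

lemma tr_sq: "tr n ((x::'a) ^ 2) = tr n x"
proof -
  have "tr n (x^2) = (\<Sum>i<n. x ^ (2^Suc i))"
    unfolding tr_def by (intro sum.cong refl) (metis pow2pow power_one_right add.commute plus_1_eq_Suc)
  also have "\<dots> = (\<Sum>i<Suc n. x ^ (2^i)) - x"
    using sum.lessThan_Suc_shift[of "\<lambda>i. x ^ (2^i)" n] by (simp del: power_Suc)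
  also have "\<dots> = tr n x" using fermat by (simp add: sum.lessThan_Suc tr_def)
  finally show ?thesis .
qed

lemma tr_pow: "tr n ((x::'a) ^ (2^m)) = tr n x"
proof (induction m)
  case 0 then show ?case by simp
next
  case (Suc m)
  have "x ^ (2^Suc m) = (x ^ (2^m))^2" by (simp add: power_mult[symmetric] mult.commute)
  then show ?case using Suc tr_sq by simp
qed

lemma tr01: "tr n (x::'a) = 0 \<or> tr n x = 1"
proof -
  have "(tr n x)^2 = tr n (x^2)" unfolding tr_def
    using frob_sum[of "{..<n}" "\<lambda>i. x^(2^i)" 1]
    by (simp add: pow2pow) (metis (no_types, lifting) add.commute plus_1_eq_Suc power_Suc power_one_right
         power_mult mult.commute sum.cong)
  then have "(tr n x)^2 = tr n x" using tr_sq by simp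
  then have "tr n x * (tr n x - 1) = 0" by (simp add: power2_eq_square algebra_simps)
  then show ?thesis by auto
qed


lemma one_ne_zero': "(1::'a) \<noteq> 0" by simp

lemma tr_zero[simp]: "tr m (0::'a) = 0" by (simp add: tr_def power_0_left)

lemma chi_plus1: "chi (tr n (y::'a) + 1) = - chi (tr n y)"
  using tr01[of y] char2 by (auto simp: chi_def)

lemma tr_sum: "finite A \<Longrightarrow> tr m (\<Sum>i\<in>A. (g i::'a)) = (\<Sum>i\<in>A. tr m (g i))"
  by (induction A rule: finite_induct) (auto simp: tr_add)


lemma b01_tr: "b01 (tr n (x::'a))" using tr01 by (simp add: b01_def)

lemma b01_add: "b01 a \<Longrightarrow> b01 b \<Longrightarrow> b01 ((a::'a) + b)"
  using char2 by (auto simp: b01_def)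

lemma b01_mult: "b01 a \<Longrightarrow> b01 b \<Longrightarrow> b01 ((a::'a) * b)"
  by (auto simp: b01_def)

lemma b01_sum: "finite A \<Longrightarrow> (\<And>i. i \<in> A \<Longrightarrow> b01 (g i)) \<Longrightarrow> b01 (\<Sum>i\<in>A. (g i::'a))"
  by (induction A rule: finite_induct) (auto simp: b01_add, simp add: b01_def)

lemma b01_prod: "finite A \<Longrightarrow> (\<And>i. i \<in> A \<Longrightarrow> b01 (g i)) \<Longrightarrow> b01 (\<Prod>i\<in>A. (g i::'a))"
  by (induction A rule: finite_induct) (auto simp: b01_mult, simp add: b01_def)

lemma chi_add: "b01 a \<Longrightarrow> b01 b \<Longrightarrow> chi ((a::'a) + b) = chi a * chi b"
  using char2 by (auto simp: b01_def chi_def)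

lemma chi_sum: "finite A \<Longrightarrow> (\<And>i. i \<in> A \<Longrightarrow> b01 (g i)) \<Longrightarrow> chi (\<Sum>i\<in>A. (g i::'a)) = (\<Prod>i\<in>A. chi (g i))"
proof (induction A rule: finite_induct)
  case empty then show ?case by (simp add: chi_def)
next
  case (insert a A)
  then show ?case by (simp add: chi_add b01_sum)
qed

lemma tr_nonzero: "\<exists>x::'a. tr n x \<noteq> 0"
proof (rule ccontr)
  assume "\<not> ?thesis"
  then have all: "\<And>x::'a. tr n x = 0" by simp
  define P :: "'a poly" where "P = (\<Sum>i<n. monom 1 (2^i))"
  have ev: "poly P x = tr n x" for x by (simp add: P_def poly_sum poly_monom tr_def)
  have "coeff P (2^(n-1)) = (\<Sum>i<n. if i = n - 1 then 1 else 0)"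
    unfolding P_def coeff_sum by (intro sum.cong refl) auto
  also have "\<dots> = 1" using npos by simp
  finally have "P \<noteq> 0" by auto
  have "degree P \<le> 2^(n-1)" unfolding P_def
    by (rule degree_sum_le) (auto intro: order.trans[OF degree_monom_le])
  moreover have "card (UNIV::'a set) \<le> degree P"
    by (rule roots_bound) (use \<open>P \<noteq> 0\<close> ev all in auto)
  ultimately have "(2::nat)^n \<le> 2^(n-1)" using cardF by linarith
  moreover have "(2::nat)^(n-1) < 2^n" using npos by simp
  ultimately show False by linarith
qed

lemma chi_tr_sum: assumes "(b::'a) \<noteq> 0" shows "(\<Sum>x\<in>UNIV. chi (tr n (b * x))) = 0"
proof -
  obtain x1 :: 'a where "tr n x1 \<noteq> 0" using tr_nonzero by blast
  then have x1: "tr n x1 = 1" using tr01 by blast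
  define x0 where "x0 = x1 / b"
  have bx0: "tr n (b * x0) = 1" using assms x1 by (simp add: x0_def)
  have "(\<Sum>x\<in>UNIV. chi (tr n (b * x))) = (\<Sum>x\<in>UNIV. chi (tr n (b * (x + x0))))"
    by (rule shift_sum[symmetric])
  also have "\<dots> = (\<Sum>x\<in>UNIV. - chi (tr n (b * x)))"
    by (intro sum.cong refl) (simp add: distrib_left tr_add bx0 chi_plus1)
  finally show ?thesis by (simp add: sum_negf)
qed

lemma indicator:
  fixes u :: "'i \<Rightarrow> 'a"
  assumes "finite A"
  shows "(\<Sum>C\<in>Pow A. chi (tr n (x * (\<Sum>j\<in>C. u j))))
       = (if \<forall>j\<in>A. tr n (u j * x) = 0 then 2 ^ card A else 0)"
proof -
  have fC: "C \<in> Pow A \<Longrightarrow> finite C" for C using assms finite_subset by auto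
  have "(\<Sum>C\<in>Pow A. chi (tr n (x * (\<Sum>j\<in>C. u j)))) = (\<Sum>C\<in>Pow A. \<Prod>j\<in>C. chi (tr n (u j * x)))"
    by (intro sum.cong refl) (simp add: sum_distrib_left tr_sum fC chi_sum b01_tr mult.commute)
  also have "\<dots> = (\<Prod>j\<in>A. chi (tr n (u j * x)) + 1)"
    using prod_add[OF assms, of "\<lambda>j. chi (tr n (u j * x))" "\<lambda>_. 1"] by simp
  also have "\<dots> = (if \<forall>j\<in>A. tr n (u j * x) = 0 then 2 ^ card A else 0)"
  proof (cases "\<forall>j\<in>A. tr n (u j * x) = 0")
    case True then show ?thesis by (simp add: chi_def)
  next
    case False
    then obtain j where "j \<in> A" "tr n (u j * x) \<noteq> 0" by blast
    then show ?thesis using assms by (auto simp: chi_def intro!: prod_zero)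
  qed
  finally show ?thesis .
qed


lemma two_zero: "(2::'a) = 0" by (metis char2 one_add_one)

lemma Ksum_zero:
  fixes u :: "'i \<Rightarrow> 'a"
  assumes fA: "finite A" and nb: "\<forall>C\<in>Pow A. b \<noteq> (\<Sum>j\<in>C. u j)"
  shows "(\<Sum>x\<in>{x. \<forall>j\<in>A. tr n (u j * x) = 0}. chi (tr n (x * b))) = 0"
proof -
  let ?K = "{x. \<forall>j\<in>A. tr n (u j * x) = 0}"
  have "2 ^ card A * (\<Sum>x\<in>?K. chi (tr n (x * b)))
      = (\<Sum>x\<in>UNIV. (if x \<in> ?K then 2 ^ card A * chi (tr n (x * b)) else 0))"
    by (simp add: sum_distrib_left sum.If_cases)
  also have "\<dots> = (\<Sum>x\<in>UNIV. (\<Sum>C\<in>Pow A. chi (tr n (x * (\<Sum>j\<in>C. u j)))) * chi (tr n (x * b)))"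
    by (intro sum.cong refl) (simp add: indicator[OF fA])
  also have "\<dots> = (\<Sum>C\<in>Pow A. \<Sum>x\<in>UNIV. chi (tr n (((\<Sum>j\<in>C. u j) + b) * x)))"
  proof -
    have "\<And>x C. chi (tr n (x * (\<Sum>j\<in>C. u j))) * chi (tr n (x * b)) = chi (tr n (((\<Sum>j\<in>C. u j) + b) * x))"
      by (simp add: distrib_right distrib_left tr_add chi_add b01_tr mult.commute)
    then show ?thesis by (simp add: sum_distrib_right sum.swap[of _ UNIV])
  qed
  also have "\<dots> = 0"
  proof (rule sum.neutral, rule ballI)
    fix C assume "C \<in> Pow A"
    then have "(\<Sum>j\<in>C. u j) + b \<noteq> 0" using nb
      by (metis add_self add_left_cancel)
    from chi_tr_sum[OF this] show "(\<Sum>x\<in>UNIV. chi (tr n (((\<Sum>j\<in>C. u j) + b) * x))) = 0" .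
  qed
  finally show ?thesis by simp
qed

lemma Zlemma:
  fixes u :: "'i \<Rightarrow> 'a" and \<Psi> :: "'a \<Rightarrow> int"
  assumes fA: "finite A" and nb: "\<forall>C\<in>Pow A. b \<noteq> (\<Sum>j\<in>C. u j)"
    and inv: "\<And>x x0. (\<forall>j\<in>A. tr n (u j * x0) = 0) \<Longrightarrow> \<Psi> (x + x0) = \<Psi> x"
  shows "(\<Sum>x\<in>UNIV. chi (tr n (x * b)) * \<Psi> x) = 0"
proof -
  let ?K = "{x. \<forall>j\<in>A. tr n (u j * x) = 0}"
  let ?S = "(\<Sum>x\<in>UNIV. chi (tr n (x * b)) * \<Psi> x)"
  have eq: "?S = chi (tr n (x0 * b)) * ?S" if "x0 \<in> ?K" for x0
  proof -
    have "?S = (\<Sum>x\<in>UNIV. chi (tr n ((x + x0) * b)) * \<Psi> (x + x0))"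
      by (rule shift_sum[symmetric])
    also have "\<dots> = (\<Sum>x\<in>UNIV. chi (tr n (x0 * b)) * (chi (tr n (x * b)) * \<Psi> x))"
      using that by (intro sum.cong refl) (simp add: inv distrib_right tr_add chi_add b01_tr)
    also have "\<dots> = chi (tr n (x0 * b)) * ?S" by (simp add: sum_distrib_left)
    finally show ?thesis .
  qed
  have "card ?K * ?S = (\<Sum>x0\<in>?K. ?S)" by simp
  also have "\<dots> = (\<Sum>x0\<in>?K. chi (tr n (x0 * b)) * ?S)"
    by (rule sum.cong[OF refl]) (rule eq, simp)
  also have "\<dots> = (\<Sum>x0\<in>?K. chi (tr n (x0 * b))) * ?S"
    by (rule sum_distrib_right[symmetric])
  also have "\<dots> = 0" using Ksum_zero[OF fA nb] by simp
  finally have "card ?K * ?S = 0" .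
  moreover have "card ?K \<noteq> 0"
  proof -
    have "(0::'a) \<in> ?K" by simp
    then show ?thesis by (simp add: card_eq_0_iff) (rule exI[of _ 0], simp)
  qed
  ultimately show ?thesis by simp
qed


lemma walsh_chi: "walsh n h a = (\<Sum>x\<in>UNIV. chi (h x + tr n (a * (x::'a))))"
  by (simp add: walsh_def chi_def)

lemma walsh_sq:
  fixes h Q G \<phi> :: "'a \<Rightarrow> 'a" and u :: "'i \<Rightarrow> 'a"
  assumes fA: "finite A"
    and hQG: "\<And>x. h x = Q x + G x"
    and Qb: "\<And>x. b01 (Q x)" and Gb: "\<And>x. b01 (G x)"
    and Q0: "Q 0 = 0" and \<phi>0: "\<phi> 0 = 0"
    and Qd: "\<And>x d. Q (x + d) = Q x + Q d + tr n (x * \<phi> d)"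
    and \<phi>inj: "\<And>d. \<phi> d = 0 \<Longrightarrow> d = 0"
    and \<phi>K: "\<And>d C. C \<subseteq> A \<Longrightarrow> \<phi> d = (\<Sum>j\<in>C. u j) \<Longrightarrow> \<forall>j\<in>A. tr n (u j * d) = 0"
    and GK: "\<And>x x0. \<forall>j\<in>A. tr n (u j * x0) = 0 \<Longrightarrow> G (x + x0) = G x"
  shows "(walsh n h a)^2 = 2^n"
proof -
  define \<Psi> where "\<Psi> d x = chi (G x + G (d + x))" for d x
  have inner: "(\<Sum>x\<in>UNIV. chi (tr n (x * \<phi> d)) * \<Psi> d x) = (if d = 0 then 2^n else 0)" for d
  proof (cases "d = 0")
    case True
    then show ?thesis using \<phi>0 cardF by (simp add: \<Psi>_def chi_def)
  next
    case False
    show ?thesis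
    proof (cases "\<exists>C\<in>Pow A. \<phi> d = (\<Sum>j\<in>C. u j)")
      case True
      then have dK: "\<forall>j\<in>A. tr n (u j * d) = 0" using \<phi>K by auto
      have "\<Psi> d x = 1" for x using GK[OF dK, of x] by (simp add: \<Psi>_def chi_def add.commute)
      then have "(\<Sum>x\<in>UNIV. chi (tr n (x * \<phi> d)) * \<Psi> d x) = (\<Sum>x\<in>UNIV. chi (tr n (\<phi> d * x)))"
        by (simp add: mult.commute)
      also have "\<dots> = 0" using \<phi>inj False by (intro chi_tr_sum) auto
      finally show ?thesis using False by simp
    next
      case nC: False
      have "(\<Sum>x\<in>UNIV. chi (tr n (x * \<phi> d)) * \<Psi> d x) = 0"
      proof (rule Zlemma[OF fA])
        show "\<forall>C\<in>Pow A. \<phi> d \<noteq> (\<Sum>j\<in>C. u j)" using nC by blast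
        fix x x0 :: 'a assume "\<forall>j\<in>A. tr n (u j * x0) = 0"
        then show "\<Psi> d (x + x0) = \<Psi> d x"
          using GK[of x0 x] GK[of x0 "d + x"] by (simp add: \<Psi>_def add.assoc)
      qed
      then show ?thesis using False by simp
    qed
  qed
  have trm: "chi (h x + tr n (a * x)) * chi (h (d + x) + tr n (a * (d + x)))
      = chi (Q d + tr n (a * d)) * (chi (tr n (x * \<phi> d)) * \<Psi> d x)" for x d
  proof -
    have b1: "b01 (h x + tr n (a * x))" for x using Qb Gb by (simp add: hQG b01_add b01_tr)
    have "chi (h x + tr n (a * x)) * chi (h (d + x) + tr n (a * (d + x)))
        = chi ((h x + tr n (a * x)) + (h (d + x) + tr n (a * (d + x))))"
      using b1 by (simp add: chi_add)
    also have "(h x + tr n (a * x)) + (h (d + x) + tr n (a * (d + x)))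
        = (Q d + tr n (a * d)) + (tr n (x * \<phi> d) + (G x + G (d + x)))"
    proof -
      have "h (d + x) = Q x + Q d + tr n (x * \<phi> d) + G (d + x)"
        using Qd[of x d] by (simp add: hQG add.commute)
      moreover have "tr n (a * (d + x)) = tr n (a * d) + tr n (a * x)"
        by (simp add: distrib_left tr_add)
      ultimately show ?thesis using two_zero by (simp add: hQG)
    qed
    also have "chi \<dots> = chi (Q d + tr n (a * d)) * (chi (tr n (x * \<phi> d)) * \<Psi> d x)"
      using Qb Gb by (simp add: chi_add b01_add b01_tr \<Psi>_def)
    finally show ?thesis .
  qed
  have "(walsh n h a)^2 = (\<Sum>x\<in>UNIV. \<Sum>y\<in>UNIV. chi (h x + tr n (a * x)) * chi (h y + tr n (a * y)))"
    by (simp add: walsh_chi power2_eq_square sum_product)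
  also have "\<dots> = (\<Sum>x\<in>UNIV. \<Sum>d\<in>UNIV. chi (h x + tr n (a * x)) * chi (h (d + x) + tr n (a * (d + x))))"
    by (rule sum.cong[OF refl], rule shift_sum[symmetric])
  also have "\<dots> = (\<Sum>d\<in>UNIV. chi (Q d + tr n (a * d)) * (\<Sum>x\<in>UNIV. chi (tr n (x * \<phi> d)) * \<Psi> d x))"
  proof -
    have "(\<Sum>x\<in>UNIV. \<Sum>d\<in>UNIV. chi (h x + tr n (a * x)) * chi (h (d + x) + tr n (a * (d + x))))
      = (\<Sum>x\<in>UNIV. \<Sum>d\<in>UNIV. chi (Q d + tr n (a * d)) * (chi (tr n (x * \<phi> d)) * \<Psi> d x))"
      by (rule sum.cong[OF refl], rule sum.cong[OF refl], rule trm)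
    also have "\<dots> = (\<Sum>d\<in>UNIV. \<Sum>x\<in>UNIV. chi (Q d + tr n (a * d)) * (chi (tr n (x * \<phi> d)) * \<Psi> d x))"
      by (rule sum.swap)
    also have "\<dots> = (\<Sum>d\<in>UNIV. chi (Q d + tr n (a * d)) * (\<Sum>x\<in>UNIV. chi (tr n (x * \<phi> d)) * \<Psi> d x))"
      by (simp only: sum_distrib_left)
    finally show ?thesis .
  qed
  also have "\<dots> = (\<Sum>d\<in>UNIV. if d = 0 then chi (Q d + tr n (a * d)) * 2^n else 0)"
    by (intro sum.cong refl) (simp add: inner)
  also have "\<dots> = 2^n" using Q0 by (simp add: chi_def)
  finally show ?thesis .
qed


lemma sum_split_add: "(\<Sum>i<a+b. f i) = (\<Sum>i<a. f i) + (\<Sum>j<b. f (a + j))"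
  for f :: "nat \<Rightarrow> 'b::comm_monoid_add"
  by (induction b) (simp_all add: add.assoc)

lemma tr_add_gen: "tr m ((x::'a) + y) = tr m x + tr m y"
  by (rule tr_add)

lemma lam_pow: "(lam::'a) ^ (2^k) = lam \<Longrightarrow> lam ^ (2^(k*m)) = lam"
proof (induction m)
  case 0 then show ?case by simp
next
  case (Suc m)
  have "lam ^ (2^(k * Suc m)) = (lam ^ (2^(k*m))) ^ (2^k)" by (simp add: pow2pow add.commute)
  then show ?case using Suc by simp
qed

lemma tr_rtr_gen:
  assumes lam: "(lam::'a) ^ (2^k) = lam"
  shows "tr k (lam * (\<Sum>i<m. y ^ (2^(k*i)))) = tr (k*m) (lam * y)"
proof (induction m)
  case 0 then show ?case by (simp add: tr_def power_0_left)
next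
  case (Suc m)
  have "tr k (lam * y ^ (2^(k*m))) = (\<Sum>j<k. (lam * y) ^ (2^(k*m + j)))"
    unfolding tr_def
  proof (intro sum.cong refl)
    fix j
    have "lam ^ (2^j) = (lam ^ (2^(k*m))) ^ (2^j)" using lam_pow[OF lam] by simp
    then show "(lam * y ^ (2^(k*m))) ^ (2^j) = (lam * y) ^ (2^(k*m + j))"
      by (simp add: power_mult_distrib pow2pow)
  qed
  moreover have "tr (k * Suc m) (lam * y) = tr (k*m) (lam * y) + (\<Sum>j<k. (lam * y) ^ (2^(k*m + j)))"
  proof -
    have eq: "k * Suc m = k*m + k" by simp
    show ?thesis unfolding tr_def eq by (rule sum_split_add)
  qed
  ultimately show ?case using Suc by (simp add: distrib_left tr_add)
qed

context
  fixes k :: nat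
  assumes n_def: "n = 4 * k" and k2: "2 \<le> k"
begin

lemma kpos: "0 < k" using k2 by simp

lemma tr_rtr: "(lam::'a) ^ (2^k) = lam \<Longrightarrow> tr k (lam * rtr n k y) = tr n (lam * y)"
  using tr_rtr_gen[where lam=lam and k=k and m=4 and y=y] kpos by (simp add: rtr_def n_def mult.commute)

lemma fermat4: "(x::'a) ^ (2^(4*k+m)) = x ^ (2^m)" using fermat_gen n_def by simp

lemma tr_vanish: assumes "(y::'a) ^ (2^(2*k)) = y" shows "tr n y = 0"
proof -
  have "tr n y = (\<Sum>i<2*k. y ^ (2^i)) + (\<Sum>j<2*k. y ^ (2^(2*k + j)))"
    unfolding tr_def n_def using sum_split_add[of "\<lambda>i. y ^ (2^i)" "2*k" "2*k"] by simp
  also have "(\<Sum>j<2*k. y ^ (2^(2*k + j))) = (\<Sum>j<2*k. y ^ (2^j))"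
    by (intro sum.cong refl) (metis assms pow2pow)
  finally show ?thesis by simp
qed

lemma Qdiff:
  fixes \<mu> :: 'a
  shows "tr n (\<mu> * (x + d) ^ (2^k + 1)) = tr n (\<mu> * x ^ (2^k + 1)) + tr n (\<mu> * d ^ (2^k + 1))
           + tr n (x * (\<mu> * d ^ (2^k) + (\<mu> * d) ^ (2^(3*k))))"
proof -
  have e: "\<mu> * (x + d) ^ (2^k + 1) = \<mu> * x ^ (2^k + 1) + \<mu> * d ^ (2^k + 1) + (\<mu> * x ^ (2^k) * d + x * (\<mu> * d ^ (2^k)))"
  proof -
    have "(x + d) ^ (2^k + 1) = (x ^ (2^k) + d ^ (2^k)) * (x + d)" by (simp add: frob)
    then show ?thesis by (simp add: algebra_simps power_add)
  qed
  have "tr n (\<mu> * x ^ (2^k) * d) = tr n ((\<mu> * x ^ (2^k) * d) ^ (2^(3*k)))" by (simp add: tr_pow)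
  also have "(\<mu> * x ^ (2^k) * d) ^ (2^(3*k)) = x * (\<mu> * d) ^ (2^(3*k))"
  proof -
    have "(x ^ (2^k)) ^ (2^(3*k)) = x" using fermat4[of x 0] by (simp add: pow2pow)
    then show ?thesis by (simp add: power_mult_distrib)
  qed
  finally have X: "tr n (\<mu> * x ^ (2^k) * d) = tr n (x * (\<mu> * d) ^ (2^(3*k)))" .
  have "tr n (\<mu> * (x + d) ^ (2^k + 1)) = tr n (\<mu> * x ^ (2^k + 1)) + tr n (\<mu> * d ^ (2^k + 1))
     + (tr n (\<mu> * x ^ (2^k) * d) + tr n (x * (\<mu> * d ^ (2^k))))"
    by (simp only: e tr_add)
  also have "\<dots> = tr n (\<mu> * x ^ (2^k + 1)) + tr n (\<mu> * d ^ (2^k + 1))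
     + (tr n (x * (\<mu> * d ^ (2^k))) + tr n (x * (\<mu> * d) ^ (2^(3*k))))"
    by (simp only: X add.commute)
  also have "\<dots> = tr n (\<mu> * x ^ (2^k + 1)) + tr n (\<mu> * d ^ (2^k + 1))
           + tr n (x * (\<mu> * d ^ (2^k) + (\<mu> * d) ^ (2^(3*k))))"
    by (simp only: distrib_left tr_add)
  finally show ?thesis .
qed


lemma exps: "(x::'a) ^ (2^(4*k)) = x" using fermat4[of x 0] by simp

lemma phi_expand:
  assumes lam: "(lam::'a) ^ (2^k) = lam" and om: "(\<omega>::'a) ^ (2^(2*k)) = \<omega>"
  shows "(lam * \<omega>) * d ^ (2^k) + ((lam * \<omega>) * d) ^ (2^(3*k))
       = lam * \<omega> * d ^ (2^k) + lam * \<omega> ^ (2^k) * d ^ (2^(3*k))"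
proof -
  have l3: "lam ^ (2^(3*k)) = lam" using lam_pow[OF lam, of 3] by (simp add: mult.commute)
  have o3: "\<omega> ^ (2^(3*k)) = \<omega> ^ (2^k)"
  proof -
    have "\<omega> ^ (2^(3*k)) = (\<omega> ^ (2^(2*k))) ^ (2^k)" by (simp add: pow2pow)
    then show ?thesis using om by simp
  qed
  show ?thesis by (simp add: power_mult_distrib l3 o3)
qed

lemma phi_fixed:
  assumes lam: "(lam::'a) ^ (2^k) = lam" and lam0: "lam \<noteq> 0"
    and om: "(\<omega>::'a) ^ (2^(2*k)) = \<omega>" and omne: "\<omega> ^ (2^k) \<noteq> \<omega>"
    and fx: "((lam * \<omega>) * d ^ (2^k) + ((lam * \<omega>) * d) ^ (2^(3*k))) ^ (2^(2*k))
           = (lam * \<omega>) * d ^ (2^k) + ((lam * \<omega>) * d) ^ (2^(3*k))"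
  shows "d ^ (2^(2*k)) = d"
proof -
  define e where "e = d ^ (2^k)"
  define eb where "eb = d ^ (2^(3*k))"
  define w where "w = \<omega> ^ (2^k)"
  have l2: "lam ^ (2^(2*k)) = lam" using lam_pow[OF lam, of 2] by (simp add: mult.commute)
  have e2: "e ^ (2^(2*k)) = eb" unfolding e_def eb_def by (simp add: pow2pow)
  have eb2: "eb ^ (2^(2*k)) = e"
  proof -
    have "eb ^ (2^(2*k)) = d ^ (2^(4*k + k))" unfolding eb_def by (simp add: pow2pow)
    then show ?thesis using fermat4[of d k] by (simp add: e_def)
  qed
  have w2: "w ^ (2^(2*k)) = w"
  proof -
    have "w ^ (2^(2*k)) = (\<omega> ^ (2^(2*k))) ^ (2^k)" unfolding w_def by (simp add: pow2pow add.commute)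
    then show ?thesis using om by (simp add: w_def)
  qed
  have P1: "(lam * \<omega>) * d ^ (2^k) + ((lam * \<omega>) * d) ^ (2^(3*k)) = lam * \<omega> * e + lam * w * eb"
    using phi_expand[OF lam om] by (simp add: e_def eb_def w_def)
  have "(lam * \<omega> * e + lam * w * eb) ^ (2^(2*k)) = lam * \<omega> * eb + lam * w * e"
    by (simp add: frob power_mult_distrib l2 om e2 eb2 w2)
  then have "lam * \<omega> * e + lam * w * eb = lam * \<omega> * eb + lam * w * e" using fx P1 by simp
  then have "lam * ((\<omega> - w) * (e - eb)) = 0" by (simp add: algebra_simps)
  moreover have "\<omega> - w \<noteq> 0" using omne by (simp add: w_def)
  ultimately have "e = eb" using lam0 by simp
  then have "e ^ (2^(3*k)) = eb ^ (2^(3*k))" by simp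
  moreover have "e ^ (2^(3*k)) = d" unfolding e_def using exps[of d] by (simp add: pow2pow)
  moreover have "eb ^ (2^(3*k)) = d ^ (2^(2*k))"
  proof -
    have "eb ^ (2^(3*k)) = d ^ (2^(4*k + 2*k))" unfolding eb_def by (simp add: pow2pow)
    then show ?thesis using fermat4[of d "2*k"] by simp
  qed
  ultimately show ?thesis by simp
qed

lemma phi_inj:
  assumes lam: "(lam::'a) ^ (2^k) = lam" and lam0: "lam \<noteq> 0"
    and om: "(\<omega>::'a) ^ (2^(2*k)) = \<omega>" and omne: "\<omega> ^ (2^k) \<noteq> \<omega>"
    and z: "(lam * \<omega>) * d ^ (2^k) + ((lam * \<omega>) * d) ^ (2^(3*k)) = 0"
  shows "d = 0"
proof -
  have "d ^ (2^(2*k)) = d" by (rule phi_fixed[OF lam lam0 om omne]) (simp add: z)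
  then have eb: "d ^ (2^(3*k)) = d ^ (2^k)"
    by (metis pow2pow add.commute mult_Suc numeral_3_eq_3 numeral_2_eq_2)
  have "lam * \<omega> * d ^ (2^k) + lam * \<omega> ^ (2^k) * d ^ (2^k) = 0"
    using z phi_expand[OF lam om, of d] eb by simp
  then have "lam * ((\<omega> + \<omega> ^ (2^k)) * d ^ (2^k)) = 0" by (simp add: algebra_simps)
  moreover have "\<omega> + \<omega> ^ (2^k) \<noteq> 0" using omne by (metis add_self add_left_cancel)
  ultimately show ?thesis using lam0 by simp
qed


lemma nontriv_U: "\<exists>y::'a. y ^ (2^(2*k)) = y \<and> y ^ (2^k + 1) = 1 \<and> y \<noteq> 1"
proof (rule ccontr)
  assume H: "\<not> ?thesis"
  define a :: nat where "a = 2^k"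
  define M where "M = (a - 1) * (a * a + 1)"
  have a4: "a \<ge> 4" unfolding a_def using k2
    by (metis power_increasing numeral_le_iff pos2 semiring_norm(69) power2_eq_square numeral_Bit0 less_imp_le_nat nat_mult_1_right one_le_numeral le_trans mult_2_right one_less_numeral_iff power_one_right) 
  then obtain b where ab: "a = b + 1" by (metis add.commute le_Suc_ex le_trans one_le_numeral plus_1_eq_Suc)
  have pn: "2^n = a^4" unfolding a_def n_def by (simp add: power_mult[symmetric] mult.commute)
  have p2: "2^(2*k) = a * a" unfolding a_def mult_2 power_add by (rule refl)
  have Mid: "M * (a + 1) + 1 = a^4" unfolding M_def ab by (simp add: algebra_simps eval_nat_numeral)
  have p2': "(a + 1) * (a - 1) + 1 = a * a" unfolding ab by (simp add: algebra_simps)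
  have Mpos: "M > 0" unfolding M_def using a4 by simp
  have roots: "x ^ M = 1" if "x \<noteq> 0" for x :: 'a
  proof -
    define y where "y = x ^ M"
    have y1: "y ^ (a + 1) = 1"
    proof -
      have Me: "M * (a + 1) = 2^n - 1" using Mid pn by simp
      have "y ^ (a + 1) = x ^ (2^n - 1)" unfolding y_def by (simp only: power_mult[symmetric] Me)
      then show ?thesis using fermat1[OF that] by simp
    qed
    have "y ^ (2^(2*k)) = y ^ ((a + 1) * (a - 1) + 1)" using p2 p2' by simp
    also have "\<dots> = (y ^ (a + 1)) ^ (a - 1) * y" by (simp only: power_add power_mult power_one_right)
    also have "\<dots> = y" using y1 by simp
    finally have "y = 1" using H y1 unfolding a_def by blast
    then show ?thesis by (simp add: y_def)
  qed
  define P :: "'a poly" where "P = monom 1 M - 1"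
  have "coeff P M = 1" using Mpos by (simp add: P_def)
  then have P0: "P \<noteq> 0" by auto
  have dP: "degree P \<le> M" unfolding P_def
    by (rule order.trans[OF degree_diff_le_max]) (simp add: degree_monom_le)
  have "card ((UNIV::'a set) - {0}) \<le> degree P"
    by (rule roots_bound[OF P0]) (simp add: P_def poly_monom roots)
  then have "2^n - 1 \<le> M" using dP cardF by (simp add: card_Diff_singleton)
  moreover have "2^n - 1 = M * (a + 1)" using Mid pn by simp
  moreover have "M * 2 \<le> M * (a + 1)" using a4 by (intro mult_le_mono2) simp
  ultimately show False using Mpos by linarith
qed

lemma omega_ne:
  assumes om: "(\<omega>::'a) ^ (2^(2*k)) = \<omega> \<and> \<omega> ^ (2^k + 1) = 1"
    and gen: "\<forall>y. y ^ (2^(2*k)) = y \<and> y ^ (2^k + 1) = 1 \<longrightarrow> (\<exists>m::nat. y = \<omega> ^ m)"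
  shows "\<omega> ^ (2^k) \<noteq> \<omega>"
proof
  assume eq: "\<omega> ^ (2^k) = \<omega>"
  have "\<omega> * \<omega> ^ (2^k) = 1" using om by (simp add: power_add mult.commute)
  then have sq: "\<omega> ^ 2 = 1" using eq by (simp add: power2_eq_square)
  obtain j where kj: "k = Suc j" using kpos by (cases k) auto
  have "\<omega> ^ (2^k) = (\<omega> ^ 2) ^ (2^j)" unfolding kj by (simp add: power_mult)
  also have "\<dots> = 1" using sq by simp
  finally have w1: "\<omega> = 1" using eq by simp
  have "\<forall>y::'a. y ^ (2^(2*k)) = y \<and> y ^ (2^k + 1) = 1 \<longrightarrow> y = 1"
  proof (intro allI impI)
    fix y :: 'a assume "y ^ (2^(2*k)) = y \<and> y ^ (2^k + 1) = 1"
    then obtain m where "y = \<omega> ^ m" using gen by blast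
    then show "y = 1" using w1 by simp
  qed
  then show False using nontriv_U by blast
qed

end


lemma b01_reduced: "(\<And>j. b01 (X j)) \<Longrightarrow> b01 (reduced_eval k c (X::nat \<Rightarrow> 'a))"
  unfolding reduced_eval_def
proof (rule b01_sum)
  show "finite (Pow {..<k})" by simp
  fix S assume S: "S \<in> Pow {..<k}" and X: "\<And>j. b01 (X j)"
  have "finite S" using S finite_subset by auto
  then have "b01 (\<Prod>i\<in>S. X i)" by (rule b01_prod) (rule X)
  moreover have "b01 (0::'a)" by (simp add: b01_def)
  ultimately show "b01 (if c S then \<Prod>i\<in>S. X i else 0)" by simp
qed

end

lemma reduced_cong:
  assumes XY: "\<And>j. j < k \<Longrightarrow> X j = Y j" shows "reduced_eval k c X = reduced_eval k c Y"
  unfolding reduced_eval_def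
proof (rule sum.cong[OF refl])
  fix S assume "S \<in> Pow {..<k}"
  then have "\<forall>i\<in>S. X i = Y i" using XY by auto
  then show "(if c S then \<Prod>i\<in>S. X i else 0) = (if c S then \<Prod>i\<in>S. Y i else 0)" by simp
qed

theorem corollary8:
  fixes n k t :: nat and u :: "nat \<Rightarrow> 'a::{field,finite}" and \<omega> :: 'a
    and F :: "nat \<Rightarrow> nat set \<Rightarrow> bool" and f :: "nat \<Rightarrow> 'a \<Rightarrow> 'a"
  assumes card: "card (UNIV :: 'a set) = 2 ^ n"
    and n_def: "n = 4 * k"
    and k2: "k \<ge> 2"
    and u_in: "\<forall>i<k. u i \<noteq> 0 \<and> u i ^ (2 ^ (2 * k)) = u i"
    and u_pair: "\<forall>i j. i < j \<and> j < k \<longrightarrow>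
        u i * u j ^ (2 ^ k) \<noteq> 0 \<and> (u i * u j ^ (2 ^ k)) ^ (2 ^ k) = u i * u j ^ (2 ^ k)"
    and \<omega>_in: "\<omega> ^ (2 ^ (2 * k)) = \<omega> \<and> \<omega> ^ (2 ^ k + 1) = 1"
    and \<omega>_gen: "\<forall>y. y ^ (2 ^ (2 * k)) = y \<and> y ^ (2 ^ k + 1) = 1 \<longrightarrow> (\<exists>m::nat. y = \<omega> ^ m)"
    and t_pos: "0 < t"
    and f_def: "\<forall>i<t. \<forall>x. f i x = reduced_eval k (F i) (\<lambda>j. tr n (u j * x))"
  shows "(\<forall>lam v. lam ^ (2 ^ k) = lam \<and> (lam \<noteq> 0 \<or> (\<exists>i<t. v i)) \<longrightarrow>
            plateaued n (\<lambda>x. tr k (lam * rtr n k (\<omega> * x ^ (2 ^ k + 1)))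
                              + (\<Sum>i<t. if v i then f i x else 0)))
     \<longleftrightarrow>
         (\<forall>v. (\<exists>i<t. v i) \<longrightarrow> plateaued n (\<lambda>x. \<Sum>i<t. if v i then f i x else 0))"
proof -
  have npos: "0 < n" using n_def k2 by simp
  note ctx = card npos
  note ctx2 = card npos n_def k2
  have om1: "\<omega> ^ (2 ^ (2 * k)) = \<omega>" using \<omega>_in by simp
  have omne: "\<omega> ^ (2^k) \<noteq> \<omega>" by (rule omega_ne[OF ctx2 \<omega>_in \<omega>_gen])
  define G where "G v x = (\<Sum>i<t. if v i then f i x else 0)" for v :: "nat \<Rightarrow> bool" and x
  have Gb: "b01 (G v x)" for v x
    unfolding G_def
  proof (rule b01_sum[OF ctx])
    fix i assume "i \<in> {..<t}"
    then have "b01 (f i x)" using f_def by (simp add: b01_reduced[OF ctx] b01_tr[OF ctx])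
    then show "b01 (if v i then f i x else 0)" by (simp add: b01_def)
  qed simp
  have GK: "G v (x + x0) = G v x" if x0: "\<forall>j\<in>{..<k}. tr n (u j * x0) = 0" for v x x0
    unfolding G_def
  proof (rule sum.cong[OF refl])
    fix i assume "i \<in> {..<t}"
    then have "f i (x + x0) = f i x" using f_def x0
      by (simp add: distrib_left tr_add[OF ctx] cong: reduced_cong)
    then show "(if v i then f i (x + x0) else 0) = (if v i then f i x else 0)" by simp
  qed
  have bent: "plateaued n (\<lambda>x. tr k (lam * rtr n k (\<omega> * x ^ (2 ^ k + 1))) + G v x)"
    if lam: "lam ^ (2^k) = lam" "lam \<noteq> 0" for lam v
  proof -
    define Q where "Q x = tr k (lam * rtr n k (\<omega> * x ^ (2 ^ k + 1)))" for x
    have Qe: "Q x = tr n ((lam * \<omega>) * x ^ (2^k + 1))" for x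
      unfolding Q_def using tr_rtr[OF ctx2 lam(1)] by (simp add: mult.assoc)
    define \<phi> where "\<phi> d = (lam * \<omega>) * d ^ (2^k) + ((lam * \<omega>) * d) ^ (2^(3*k))" for d
    have W: "(walsh n (\<lambda>x. Q x + G v x) a)^2 = 2^n" for a
    proof (rule walsh_sq[OF ctx, where A="{..<k}" and Q=Q and G="G v" and \<phi>=\<phi> and u=u])
      show "finite {..<k}" by simp
      show "\<And>x. Q x + G v x = Q x + G v x" by simp
      show "\<And>x. b01 (Q x)" by (simp add: Qe b01_tr[OF ctx])
      show "\<And>x. b01 (G v x)" by (rule Gb)
      show "Q 0 = 0" by (simp add: Qe tr_def power_0_left)
      show "\<phi> 0 = 0" by (simp add: \<phi>_def power_0_left)
      show "\<And>x d. Q (x + d) = Q x + Q d + tr n (x * \<phi> d)"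
        unfolding Qe \<phi>_def by (rule Qdiff[OF ctx2])
      show "\<And>d. \<phi> d = 0 \<Longrightarrow> d = 0"
        unfolding \<phi>_def by (rule phi_inj[OF ctx2 lam(1) lam(2) om1 omne])
      show "\<forall>j\<in>{..<k}. tr n (u j * d) = 0" if C: "C \<subseteq> {..<k}" "\<phi> d = (\<Sum>j\<in>C. u j)" for d C
      proof -
        have fC: "finite C" using C(1) finite_subset by auto
        have "(\<Sum>j\<in>C. u j) ^ (2^(2*k)) = (\<Sum>j\<in>C. u j)"
          unfolding frob_sum[OF ctx fC] using C(1) u_in by (intro sum.cong refl) auto
        then have fxd: "((lam * \<omega>) * d ^ (2^k) + ((lam * \<omega>) * d) ^ (2^(3*k))) ^ (2^(2*k))
           = (lam * \<omega>) * d ^ (2^k) + ((lam * \<omega>) * d) ^ (2^(3*k))"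
          using C(2) unfolding \<phi>_def by simp
        have "d ^ (2^(2*k)) = d" by (rule phi_fixed[OF ctx2 lam(1) lam(2) om1 omne fxd])
        then have "(u j * d) ^ (2^(2*k)) = u j * d" if "j < k" for j
          using that u_in by (simp add: power_mult_distrib)
        then show ?thesis by (auto intro: tr_vanish[OF ctx2])
      qed
      show "\<And>x x0. \<forall>j\<in>{..<k}. tr n (u j * x0) = 0 \<Longrightarrow> G v (x + x0) = G v x" by (rule GK)
    qed
    have pw: "(2::int)^n = (2 ^ (2*k))^2"
    proof -
      have e: "n = 2*k*2" using n_def by simp
      show ?thesis unfolding e by (rule power_mult)
    qed
    have wv: "walsh n (\<lambda>x. Q x + G v x) a \<in> {0, 2 ^ (2*k), - (2 ^ (2*k))}" for a
    proof -
      have "(walsh n (\<lambda>x. Q x + G v x) a)^2 = (2 ^ (2*k))^2"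
        using W[of a] pw by simp
      then show ?thesis unfolding power2_eq_iff by blast
    qed
    show ?thesis unfolding plateaued_def
    proof (intro exI[of _ "2*k"] conjI allI)
      show "n \<le> 2*(2*k)" using n_def by simp
      show "2*k \<le> n" using n_def by simp
      fix a
      show "walsh n (\<lambda>x. tr k (lam * rtr n k (\<omega> * x ^ (2 ^ k + 1))) + G v x) a \<in> {0, 2 ^ (2*k), - (2 ^ (2*k))}"
        using wv[of a] unfolding Q_def .
    qed
  qed
  show ?thesis
  proof
    assume H: "\<forall>lam v. lam ^ (2 ^ k) = lam \<and> (lam \<noteq> 0 \<or> (\<exists>i<t. v i)) \<longrightarrow>
            plateaued n (\<lambda>x. tr k (lam * rtr n k (\<omega> * x ^ (2 ^ k + 1)))
                              + (\<Sum>i<t. if v i then f i x else 0))"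
    show "\<forall>v. (\<exists>i<t. v i) \<longrightarrow> plateaued n (\<lambda>x. \<Sum>i<t. if v i then f i x else 0)"
    proof (intro allI impI)
      fix v :: "nat \<Rightarrow> bool" assume "\<exists>i<t. v i"
      then have "plateaued n (\<lambda>x. tr k (0 * rtr n k (\<omega> * x ^ (2 ^ k + 1)))
                              + (\<Sum>i<t. if v i then f i x else 0))"
        using H[rule_format, of 0 v] by simp
      then show "plateaued n (\<lambda>x. \<Sum>i<t. if v i then f i x else 0)"
        by (simp add: tr_def power_0_left)
    qed
  next
    assume H2: "\<forall>v. (\<exists>i<t. v i) \<longrightarrow> plateaued n (\<lambda>x. \<Sum>i<t. if v i then f i x else 0)"
    show "\<forall>lam v. lam ^ (2 ^ k) = lam \<and> (lam \<noteq> 0 \<or> (\<exists>i<t. v i)) \<longrightarrow>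
            plateaued n (\<lambda>x. tr k (lam * rtr n k (\<omega> * x ^ (2 ^ k + 1)))
                              + (\<Sum>i<t. if v i then f i x else 0))"
    proof (intro allI impI)
      fix lam :: 'a and v :: "nat \<Rightarrow> bool" assume A: "lam ^ (2 ^ k) = lam \<and> (lam \<noteq> 0 \<or> (\<exists>i<t. v i))"
      show "plateaued n (\<lambda>x. tr k (lam * rtr n k (\<omega> * x ^ (2 ^ k + 1)))
                              + (\<Sum>i<t. if v i then f i x else 0))"
      proof (cases "lam = 0")
        case True
        then have "\<exists>i<t. v i" using A by simp
        then have "plateaued n (\<lambda>x. \<Sum>i<t. if v i then f i x else 0)" using H2 by simp
        then show ?thesis using True by (simp add: tr_def power_0_left)
      next
        case False
        have "lam ^ (2^k) = lam" using A by simp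
        from bent[OF this False, of v] show ?thesis unfolding G_def .
      qed
    qed
  qed
qed

end
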